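(* For all terms $q,q'$ the following are equivalent: (1) $q=_{\mathrm{CLC}_0}q'$; (2) $q=_{\mathrm{CLC}}q'$; (3) $q=_{\mathrm{CLC}^+}q'$.
   Context: Terms are built from variables and the constants $C,T,F,K,S$ by binary application (left-associative). $\mathrm{CLC}_0$ is the (unconditional) term rewriting system with rules $C\,T\,x\,y\to x$; $C\,F\,x\,y\to y$; $C\,z\,x\,x\to x$; $K\,x\,y\to x$; $S\,x\,y\,z\to x\,z\,(y\,z)$. $\mathrm{CLC}$ is the conditional system with rules $C\,T\,x\,y\to x$; $C\,F\,x\,y\to y$; $C\,z\,x\,y\to x \Leftarrow x=y$; $K\,x\,y\to x$; $S\,x\,y\,z\to x\,z\,(y\,z)$, where $=$ is convertibility in the system itself, defined by levels: $R_0$ interprets the condition as the empty relation, $R_{n+1}$ interprets $=$ as the conversion relation of $\to_{R_n}$, and $\to_{\mathrm{CLC}}=\bigcup_n\to_{R_n}$. $\mathrm{CLC}^+$ is defined in the same way from the rules of $\mathrm{CLC}$ plus $C\,z\,x\,y\to y\Leftarrow x=y$. For a system $R$, $=_R$ denotes the conversion relation (reflexive–symmetric–transitive closure of one-step rewriting closed under contexts). *)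

theory Defs
  imports Main
begin

datatype 'v trm = Var 'v | CC | TT | FF | KK | SS | App "'v trm" "'v trm"

inductive ctx_step :: "('v trm \<Rightarrow> 'v trm \<Rightarrow> bool) \<Rightarrow> 'v trm \<Rightarrow> 'v trm \<Rightarrow> bool"
  for R where
  root: "R s t \<Longrightarrow> ctx_step R s t"
| appL: "ctx_step R s t \<Longrightarrow> ctx_step R (App s u) (App t u)"
| appR: "ctx_step R s t \<Longrightarrow> ctx_step R (App u s) (App u t)"

text \<open>Root steps of CLC_0 (rule variables range over all terms = all substitution instances).\<close>
inductive root_CLC0 :: "'v trm \<Rightarrow> 'v trm \<Rightarrow> bool" where
  "root_CLC0 (App (App (App CC TT) x) y) x"
| "root_CLC0 (App (App (App CC FF) x) y) y"
| "root_CLC0 (App (App (App CC z) x) x) x"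
| "root_CLC0 (App (App KK x) y) x"
| "root_CLC0 (App (App (App SS x) y) z) (App (App x z) (App y z))"

definition step_CLC0 :: "'v trm \<Rightarrow> 'v trm \<Rightarrow> bool" where
  "step_CLC0 = ctx_step root_CLC0"

text \<open>Root steps of CLC, with the condition x = y interpreted by the relation E.\<close>
inductive root_CLC :: "('v trm \<Rightarrow> 'v trm \<Rightarrow> bool) \<Rightarrow> 'v trm \<Rightarrow> 'v trm \<Rightarrow> bool"
  for E where
  "root_CLC E (App (App (App CC TT) x) y) x"
| "root_CLC E (App (App (App CC FF) x) y) y"
| "E x y \<Longrightarrow> root_CLC E (App (App (App CC z) x) y) x"
| "root_CLC E (App (App KK x) y) x"
| "root_CLC E (App (App (App SS x) y) z) (App (App x z) (App y z))"

inductive root_CLCp :: "('v trm \<Rightarrow> 'v trm \<Rightarrow> bool) \<Rightarrow> 'v trm \<Rightarrow> 'v trm \<Rightarrow> bool"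
  for E where
  "root_CLCp E (App (App (App CC TT) x) y) x"
| "root_CLCp E (App (App (App CC FF) x) y) y"
| "E x y \<Longrightarrow> root_CLCp E (App (App (App CC z) x) y) x"
| "E x y \<Longrightarrow> root_CLCp E (App (App (App CC z) x) y) y"
| "root_CLCp E (App (App KK x) y) x"
| "root_CLCp E (App (App (App SS x) y) z) (App (App x z) (App y z))"

fun level_CLC :: "nat \<Rightarrow> 'v trm \<Rightarrow> 'v trm \<Rightarrow> bool" where
  "level_CLC 0 = ctx_step (root_CLC (\<lambda>_ _. False))"
| "level_CLC (Suc n) = ctx_step (root_CLC (equivclp (level_CLC n)))"

fun level_CLCp :: "nat \<Rightarrow> 'v trm \<Rightarrow> 'v trm \<Rightarrow> bool" where
  "level_CLCp 0 = ctx_step (root_CLCp (\<lambda>_ _. False))"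
| "level_CLCp (Suc n) = ctx_step (root_CLCp (equivclp (level_CLCp n)))"

definition step_CLC :: "'v trm \<Rightarrow> 'v trm \<Rightarrow> bool" where
  "step_CLC s t \<longleftrightarrow> (\<exists>n. level_CLC n s t)"

definition step_CLCp :: "'v trm \<Rightarrow> 'v trm \<Rightarrow> bool" where
  "step_CLCp s t \<longleftrightarrow> (\<exists>n. level_CLCp n s t)"

end

theory Submission
  imports Defs
begin

lemma equivclp_map:
  assumes "equivclp r a b" "\<And>x y. r x y \<Longrightarrow> r' (f x) (f y)"
  shows "equivclp r' (f a) (f b)"
  using assms(1)
proof (induction rule: equivclp_induct)
  case base then show ?case by simp
next
  case (step y z)
  from step(2) have "r' (f y) (f z) \<or> r' (f z) (f y)" using assms(2) by blast
  then have "equivclp r' (f y) (f z)"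
    by (metis equivclp_sym r_into_equivclp)
  with step(3) show ?case by (meson equivclp_trans)
qed

abbreviation E0 where "E0 \<equiv> equivclp step_CLC0"

lemma E0_appL: "E0 a b \<Longrightarrow> E0 (App a u) (App b u)"
  by (erule equivclp_map) (simp add: step_CLC0_def ctx_step.appL)

lemma E0_appR: "E0 a b \<Longrightarrow> E0 (App u a) (App u b)"
  by (erule equivclp_map) (simp add: step_CLC0_def ctx_step.appR)

lemma E0_root: "root_CLC0 s t \<Longrightarrow> E0 s t"
  by (simp add: step_CLC0_def ctx_step.root r_into_equivclp)

lemma ctx_E0: "ctx_step R s t \<Longrightarrow> (\<And>a b. R a b \<Longrightarrow> E0 a b) \<Longrightarrow> E0 s t"
  by (induction rule: ctx_step.induct) (auto intro: E0_appL E0_appR)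

lemma E0_idem: "equivclp E0 a b \<Longrightarrow> E0 a b"
  by (induction rule: equivclp_induct) (auto intro: equivclp_trans equivclp_sym)

lemma ctx_mono: "ctx_step R s t \<Longrightarrow> (\<And>a b. R a b \<Longrightarrow> R' a b) \<Longrightarrow> ctx_step R' s t"
  by (induction rule: ctx_step.induct) (auto intro: ctx_step.intros)

lemma rootp_E0:
  assumes "root_CLCp E s t" "\<And>a b. E a b \<Longrightarrow> E0 a b"
  shows "E0 s t"
  using assms(1)
proof (cases rule: root_CLCp.cases)
  case (3 y z)
  have "E0 (App (App (App CC z) t) y) (App (App (App CC z) t) t)"
    using assms(2)[OF 3(2)] by (intro E0_appR) (meson equivclp_sym)
  moreover have "E0 (App (App (App CC z) t) t) t" by (intro E0_root) (rule root_CLC0.intros)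
  ultimately show ?thesis using 3 by (meson equivclp_trans)
next
  case (4 x z)
  have "E0 (App (App (App CC z) x) t) (App (App (App CC z) t) t)"
    using assms(2)[OF 4(2)] by (intro E0_appL E0_appR)
  moreover have "E0 (App (App (App CC z) t) t) t" by (intro E0_root) (rule root_CLC0.intros)
  ultimately show ?thesis using 4 by (meson equivclp_trans)
qed (auto intro: E0_root root_CLC0.intros)

lemma levelp_E0: "level_CLCp n s t \<Longrightarrow> E0 s t"
proof (induction n arbitrary: s t)
  case 0
  then show ?case apply simp apply (erule ctx_E0) apply (erule rootp_E0) apply simp done
next
  case (Suc n)
  have "\<And>a b::'a trm. equivclp (level_CLCp n) a b \<Longrightarrow> E0 a b"
  proof -
    fix a b :: "'a trm" assume "equivclp (level_CLCp n) a b"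
    then have "equivclp E0 a b" by (rule equivclp_map[where f=id, simplified]) (use Suc.IH in auto)
    then show "E0 a b" by (rule E0_idem)
  qed
  with Suc.prems show ?case apply simp apply (erule ctx_E0) apply (erule rootp_E0) apply blast done
qed

lemma level_sub: "level_CLC n s t \<Longrightarrow> level_CLCp n s t"
proof (induction n arbitrary: s t)
  case 0
  then show ?case
    by (auto elim!: ctx_mono elim: root_CLC.cases intro: root_CLCp.intros)
next
  case (Suc n)
  have m: "\<And>a b::'a trm. equivclp (level_CLC n) a b \<Longrightarrow> equivclp (level_CLCp n) a b"
    by (erule equivclp_map[where f=id, simplified]) (use Suc.IH in auto)
  from Suc.prems show ?case
    apply simp
    apply (erule ctx_mono)
    apply (erule root_CLC.cases)
        apply (auto intro: root_CLCp.intros m)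
    done
qed

lemma s0_sub: "step_CLC0 s t \<Longrightarrow> step_CLC s t"
  unfolding step_CLC_def step_CLC0_def
  apply (rule exI[of _ "Suc 0"])
  apply simp
  apply (erule ctx_mono)
  apply (erule root_CLC0.cases)
  apply (auto intro: root_CLC.intros)
  done

lemma mono_eq: "(\<And>a b. r a b \<Longrightarrow> r' a b) \<Longrightarrow> equivclp r a b \<Longrightarrow> equivclp r' a b"
  by (erule equivclp_map[where f=id, simplified]) auto

theorem mainTheorem2:
  fixes q q' :: "'v trm"
  shows "(equivclp step_CLC0 q q' \<longleftrightarrow> equivclp step_CLC q q')
       \<and> (equivclp step_CLC q q' \<longleftrightarrow> equivclp step_CLCp q q')"
proof -
  have a: "E0 q q' \<Longrightarrow> equivclp step_CLC q q'" by (erule mono_eq[rotated]) (rule s0_sub)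
  have b: "equivclp step_CLC q q' \<Longrightarrow> equivclp step_CLCp q q'"
    by (erule mono_eq[rotated]) (auto simp: step_CLC_def step_CLCp_def intro: level_sub)
  have c: "equivclp step_CLCp q q' \<Longrightarrow> E0 q q'"
  proof -
    assume "equivclp step_CLCp q q'"
    then have "equivclp E0 q q'" by (rule mono_eq[rotated]) (auto simp: step_CLCp_def intro: levelp_E0)
    then show ?thesis by (rule E0_idem)
  qed
  show ?thesis using a b c by blast
qed

end
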